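(* Let $r,c\ge3$, $n=rc$, let $\mathcal{M}\subseteq\{1,\dots,n\}$ be a set of sampled pixels (vectorized indexing), $A=\mathbf{I}_{\mathcal{M}}$, $\varepsilon>0$, and $y\in\mathbb{R}^{|\mathcal{M}|}$ (indexed by $\mathcal{M}$). Let $Z\in\mathbb{R}^{r\times c}$, $z=\mathrm{vec}(Z)$, be feasible for $\min_{z'}\|\Delta z'\|_1$ subject to $\|Az'-y\|_\infty\le\varepsilon$. With $\mathcal{A}=\{i\in\mathcal{M}:|y_i-z_i|=\varepsilon\}$, $\mathcal{A}_\uparrow=\{i\in\mathcal{M}: y_i-z_i=\varepsilon\}$, $\mathcal{A}_\downarrow=\{i\in\mathcal{M}: y_i-z_i=-\varepsilon\}$ and $\bar{\mathcal{A}}=\mathcal{M}\setminus\mathcal{A}$, $Z$ is a minimizer if and only if there exists $u\in\mathbb{R}^{2(n-r-c)}$ such that $$(\Delta^{\mathsf{T}})_{\overline{\mathcal{M}}\cup\bar{\mathcal{A}}}\,u=\mathbf{0},\quad u_{\mathcal{I}}=\mathrm{sign}(\Delta z)_{\mathcal{I}},\quad \|u\|_\infty\le1,\quad (\Delta^{\mathsf{T}})_{\mathcal{A}_\uparrow}u\ge\mathbf{0},\quad (\Delta^{\mathsf{T}})_{\mathcal{A}_\downarrow}u\le\mathbf{0},$$ where $\mathcal{I}$ is the set of indices of nonzero entries of $\Delta z$ and $\overline{\mathcal{M}}=\{1,\dots,n\}\setminus\mathcal{M}$.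
   Context: $\mathrm{vec}$ stacks columns (pixel $(i,j)\mapsto$ index $(j-1)r+i$). For $p\ge3$, $D^{(p)}\in\mathbb{R}^{(p-2)\times p}$ is the second-order difference operator with $k$-th row having entries $1,-2,1$ in columns $k,k+1,k+2$; $D_V=D^{(r)}$, $D_H=D^{(c)}$, $\Delta=\begin{bmatrix}\mathbf{I}_c\otimes D_V\\ D_H\otimes\mathbf{I}_r\end{bmatrix}\in\mathbb{R}^{2(n-r-c)\times n}$. $\mathbf{I}_{\mathcal{M}}$ consists of the rows of the identity indexed by $\mathcal{M}$; $M_{\mathcal{S}}$ denotes rows of $M$ indexed by $\mathcal{S}$, $v_{\mathcal{S}}$ the subvector; $\mathrm{sign}$ is entrywise with $\mathrm{sign}(0)=0$; inequalities are entrywise. *)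

theory Defs
  imports Complex_Main
begin

(* Conventions: all indices are 0-based. Vectors of length p are functions nat => real
   of which only entries 0..p-1 are used; matrices are functions nat => nat => real
   (row, column). *)

definition idm :: "nat \<Rightarrow> nat \<Rightarrow> real" where
  "idm i j = (if i = j then 1 else 0)"

definition Dop :: "nat \<Rightarrow> nat \<Rightarrow> nat \<Rightarrow> real" where
  "Dop p k j = (if k < p - 2 \<and> j < p then
                  (if j = k then 1 else if j = k + 1 then -2 else if j = k + 2 then 1 else 0)
                else 0)"

definition kron :: "(nat \<Rightarrow> nat \<Rightarrow> real) \<Rightarrow> nat \<Rightarrow> nat \<Rightarrow> (nat \<Rightarrow> nat \<Rightarrow> real)
                    \<Rightarrow> nat \<Rightarrow> nat \<Rightarrow> real" where
  "kron A m2 n2 B p q = A (p div m2) (q div n2) * B (p mod m2) (q mod n2)"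

text \<open>Delta = [I_c (x) D_V ; D_H (x) I_r], of size 2(n-r-c) x n with n = r c.\<close>
definition Delta :: "nat \<Rightarrow> nat \<Rightarrow> nat \<Rightarrow> nat \<Rightarrow> real" where
  "Delta r c p q =
     (if p < c * (r - 2) then kron idm (r - 2) r (Dop r) p q
      else kron (Dop c) r r idm (p - c * (r - 2)) q)"

definition nrows :: "nat \<Rightarrow> nat \<Rightarrow> nat" where
  "nrows r c = 2 * (r * c - r - c)"

definition vec :: "nat \<Rightarrow> (nat \<Rightarrow> nat \<Rightarrow> real) \<Rightarrow> nat \<Rightarrow> real" where
  "vec r Z k = Z (k mod r) (k div r)"

definition Dz :: "nat \<Rightarrow> nat \<Rightarrow> (nat \<Rightarrow> real) \<Rightarrow> nat \<Rightarrow> real" where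
  "Dz r c z p = (\<Sum>q<r * c. Delta r c p q * z q)"

definition DTu :: "nat \<Rightarrow> nat \<Rightarrow> (nat \<Rightarrow> real) \<Rightarrow> nat \<Rightarrow> real" where
  "DTu r c u q = (\<Sum>p<nrows r c. Delta r c p q * u p)"

definition TV1 :: "nat \<Rightarrow> nat \<Rightarrow> (nat \<Rightarrow> real) \<Rightarrow> real" where
  "TV1 r c z = (\<Sum>p<nrows r c. \<bar>Dz r c z p\<bar>)"

text \<open>Feasibility: || A z - y ||_inf <= eps with A = I_M, y indexed by M.\<close>
definition feasible :: "nat set \<Rightarrow> (nat \<Rightarrow> real) \<Rightarrow> real \<Rightarrow> (nat \<Rightarrow> real) \<Rightarrow> bool" where
  "feasible M y eps z = (\<forall>i\<in>M. \<bar>z i - y i\<bar> \<le> eps)"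

definition is_minimizer :: "nat \<Rightarrow> nat \<Rightarrow> nat set \<Rightarrow> (nat \<Rightarrow> real) \<Rightarrow> real \<Rightarrow> (nat \<Rightarrow> real) \<Rightarrow> bool" where
  "is_minimizer r c M y eps z =
     (feasible M y eps z \<and> (\<forall>z'. feasible M y eps z' \<longrightarrow> TV1 r c z \<le> TV1 r c z'))"

end

theory Submission
  imports Defs "HOL-Analysis.Analysis"
begin


lemma small_t:
  fixes a b :: "nat \<Rightarrow> real"
  assumes "finite F" "\<forall>k\<in>F. b k > 0"
  shows "\<exists>t>0. \<forall>k\<in>F. t * \<bar>a k\<bar> \<le> b k"
  using assms
proof (induction F rule: finite_induct)
  case empty
  then show ?case by (intro exI[of _ 1]) auto
next
  case (insert x F)
  then obtain t where t: "t > 0" "\<forall>k\<in>F. t * \<bar>a k\<bar> \<le> b k" by auto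
  define t' where "t' = min t (b x / (\<bar>a x\<bar> + 1))"
  have bx: "b x > 0" using insert by auto
  have t'pos: "t' > 0" using t bx by (simp add: t'_def)
  have "t' * \<bar>a x\<bar> \<le> b x"
  proof -
    have "t' * \<bar>a x\<bar> \<le> (b x / (\<bar>a x\<bar> + 1)) * \<bar>a x\<bar>"
      by (rule mult_right_mono) (auto simp: t'_def)
    also have "\<dots> \<le> b x" using bx by (simp add: field_simps)
    finally show ?thesis .
  qed
  moreover have "\<forall>k\<in>F. t' * \<bar>a k\<bar> \<le> b k"
  proof
    fix k assume "k \<in> F"
    have "t' * \<bar>a k\<bar> \<le> t * \<bar>a k\<bar>" by (rule mult_right_mono) (auto simp: t'_def)
    thus "t' * \<bar>a k\<bar> \<le> b k" using t \<open>k \<in> F\<close> by auto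
  qed
  ultimately show ?case using t'pos by auto
qed

lemma cpt: fixes S :: "nat \<Rightarrow> real set" assumes "\<And>i. compact (S i)"
  shows "compact (PiE UNIV S)"
proof -
  have "compactin (product_topology (\<lambda>i. euclidean) UNIV) (PiE UNIV S)"
    using assms by (simp add: compactin_PiE)
  thus ?thesis by (simp add: euclidean_product_topology)
qed

lemma swap_sum:
  "(\<Sum>i<r*c. d i * DTu r c u i) = (\<Sum>p<nrows r c. u p * Dz r c d p)"
  unfolding DTu_def Dz_def
  apply (simp add: sum_distrib_left sum_distrib_right)
  apply (subst sum.swap)
  apply (simp add: mult_ac)
  done

lemma DTu_comb:
  "DTu r c (\<lambda>p. a p + t * (b p - a p)) i = DTu r c a i + t * (DTu r c b i - DTu r c a i)"
  unfolding DTu_def by (simp add: algebra_simps sum.distrib sum_distrib_left sum_subtractf)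

lemma Dz_comb:
  "Dz r c (\<lambda>q. z q + t * d q) p = Dz r c z p + t * Dz r c d p"
  unfolding Dz_def by (simp add: algebra_simps sum.distrib sum_distrib_left)

lemma Dz_diff:
  "Dz r c (\<lambda>q. a q - b q) p = Dz r c a p - Dz r c b p"
  unfolding Dz_def by (simp add: algebra_simps sum_subtractf)


lemma abs_step:
  fixes a t e :: real
  assumes "a \<noteq> 0" "t * \<bar>e\<bar> \<le> \<bar>a\<bar>" "t \<ge> 0"
  shows "\<bar>a + t*e\<bar> = \<bar>a\<bar> + t*(sgn a * e)"
proof -
  have "\<bar>t*e\<bar> \<le> \<bar>a\<bar>" using assms by (simp add: abs_mult)
  moreover have H: "\<And>x. \<bar>x\<bar> \<le> \<bar>a\<bar> \<Longrightarrow> \<bar>a + x\<bar> = \<bar>a\<bar> + sgn a * x"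
    using assms(1) by (auto simp: sgn_if abs_if)
  ultimately have "\<bar>a + t*e\<bar> = \<bar>a\<bar> + sgn a * (t*e)" by blast
  thus ?thesis by (simp add: algebra_simps)
qed
lemma conv1:
  fixes a b t :: real
  assumes "-1 \<le> a" "a \<le> 1" "-1 \<le> b" "b \<le> 1" "0 \<le> t" "t \<le> 1"
  shows "-1 \<le> a + t*(b-a) \<and> a + t*(b-a) \<le> 1"
proof -
  have e: "a + t*(b-a) = (1-t)*a + t*b" by (simp add: algebra_simps)
  have "(1-t)*a \<le> (1-t)*1" by (rule mult_left_mono) (use assms in auto)
  moreover have "t*b \<le> t*1" by (rule mult_left_mono) (use assms in auto)
  moreover have "(1-t)*(-1) \<le> (1-t)*a" by (rule mult_left_mono) (use assms in auto)
  moreover have "t*(-1) \<le> t*b" by (rule mult_left_mono) (use assms in auto)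
  ultimately show ?thesis unfolding e by (auto simp: algebra_simps)
qed



lemma suff:
  fixes z y u :: "nat \<Rightarrow> real"
  assumes Msub: "M \<subseteq> {..<r*c}" and feas: "feasible M y eps z"
    and h1: "\<forall>i \<in> ({..<r*c} - M) \<union> (M - {i \<in> M. \<bar>y i - z i\<bar> = eps}). DTu r c u i = 0"
    and h2: "\<forall>p \<in> {p \<in> {..<nrows r c}. Dz r c z p \<noteq> 0}. u p = sgn (Dz r c z p)"
    and h3: "\<forall>p < nrows r c. \<bar>u p\<bar> \<le> 1"
    and h4: "\<forall>i \<in> {i \<in> M. y i - z i = eps}. DTu r c u i \<ge> 0"
    and h5: "\<forall>i \<in> {i \<in> M. y i - z i = - eps}. DTu r c u i \<le> 0"
  shows "is_minimizer r c M y eps z"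
  unfolding is_minimizer_def
proof (intro conjI allI impI)
  show "feasible M y eps z" by fact
  fix z' assume f': "feasible M y eps z'"
  have e1: "TV1 r c z = (\<Sum>p<nrows r c. u p * Dz r c z p)"
    unfolding TV1_def
  proof (rule sum.cong)
    fix p assume "p \<in> {..<nrows r c}"
    thus "\<bar>Dz r c z p\<bar> = u p * Dz r c z p"
      using h2 by (cases "Dz r c z p = 0") (auto simp: sgn_if)
  qed simp
  have e2: "(\<Sum>p<nrows r c. u p * Dz r c z' p) \<le> TV1 r c z'"
    unfolding TV1_def
  proof (rule sum_mono)
    fix p assume "p \<in> {..<nrows r c}"
    hence "\<bar>u p\<bar> \<le> 1" using h3 by auto
    have "u p * Dz r c z' p \<le> \<bar>u p * Dz r c z' p\<bar>" by simp
    also have "\<dots> = \<bar>u p\<bar> * \<bar>Dz r c z' p\<bar>" by (simp add: abs_mult)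
    also have "\<dots> \<le> \<bar>Dz r c z' p\<bar>"
      using \<open>\<bar>u p\<bar> \<le> 1\<close> by (simp add: mult_left_le_one_le)
    finally show "u p * Dz r c z' p \<le> \<bar>Dz r c z' p\<bar>" .
  qed
  have e3: "(\<Sum>p<nrows r c. u p * Dz r c z' p) - (\<Sum>p<nrows r c. u p * Dz r c z p)
      = (\<Sum>i<r*c. (z' i - z i) * DTu r c u i)"
  proof -
    have "(\<Sum>i<r*c. (z' i - z i) * DTu r c u i) = (\<Sum>p<nrows r c. u p * Dz r c (\<lambda>q. z' q - z q) p)"
      by (rule swap_sum)
    also have "\<dots> = (\<Sum>p<nrows r c. u p * Dz r c z' p - u p * Dz r c z p)"
      by (simp add: Dz_diff algebra_simps)
    finally show ?thesis by (simp add: sum_subtractf)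
  qed
  have e4: "(\<Sum>i<r*c. (z' i - z i) * DTu r c u i) \<ge> 0"
  proof (rule sum_nonneg)
    fix i assume i: "i \<in> {..<r*c}"
    show "(z' i - z i) * DTu r c u i \<ge> 0"
    proof (cases "i \<in> M")
      case False thus ?thesis using h1 i by auto
    next
      case True
      have a': "\<bar>z' i - y i\<bar> \<le> eps" using f' True unfolding feasible_def by auto
      show ?thesis
      proof (cases "y i - z i = eps")
        case True2: True
        have "DTu r c u i \<ge> 0" using h4 True True2 by auto
        moreover have "z' i - z i \<ge> 0" using a' True2 by auto
        ultimately show ?thesis by simp
      next
        case F2: False
        show ?thesis
        proof (cases "y i - z i = - eps")
          case True3: True
          have "DTu r c u i \<le> 0" using h5 True True3 by auto
          moreover have "z' i - z i \<le> 0" using a' True3 by auto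
          ultimately show ?thesis by (simp add: mult_nonpos_nonpos)
        next
          case F3: False
          have "\<bar>y i - z i\<bar> \<noteq> eps" using F2 F3 by auto
          thus ?thesis using h1 True by auto
        qed
      qed
    qed
  qed
  show "TV1 r c z \<le> TV1 r c z'" using e1 e2 e3 e4 by linarith
qed



lemma nec:
  fixes z y :: "nat \<Rightarrow> real"
  assumes Msub: "M \<subseteq> {..<r*c}" and eps: "eps > 0" and minz: "is_minimizer r c M y eps z"
  shows "\<exists>u. (\<forall>i \<in> ({..<r*c} - M) \<union> (M - {i \<in> M. \<bar>y i - z i\<bar> = eps}). DTu r c u i = 0) \<and>
    (\<forall>p \<in> {p \<in> {..<nrows r c}. Dz r c z p \<noteq> 0}. u p = sgn (Dz r c z p)) \<and>
    (\<forall>p < nrows r c. \<bar>u p\<bar> \<le> 1) \<and>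
    (\<forall>i \<in> {i \<in> M. y i - z i = eps}. DTu r c u i \<ge> 0) \<and>
    (\<forall>i \<in> {i \<in> M. y i - z i = - eps}. DTu r c u i \<le> 0)"
proof -
  define n where "n = r * c"
  define N where "N = nrows r c"
  have feas: "feasible M y eps z" using minz unfolding is_minimizer_def by auto
  define Up where "Up i \<longleftrightarrow> i \<in> M \<and> y i - z i = eps" for i
  define Dn where "Dn i \<longleftrightarrow> i \<in> M \<and> y i - z i = - eps" for i
  have notboth: "\<not> (Up i \<and> Dn i)" for i using eps unfolding Up_def Dn_def by auto
  define \<rho> where "\<rho> i = (if Up i then (\<lambda>x::real. min x 0) else if Dn i then (\<lambda>x. max x 0) else (\<lambda>x. x))" for i
  define C where "C i c \<longleftrightarrow> (if Up i then c \<ge> 0 else if Dn i then c \<le> 0 else c = (0::real))" for i c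
  have R1: "\<rho> i x * x = (\<rho> i x)^2" for i x
    unfolding \<rho>_def by (auto simp: power2_eq_square min_def max_def)
  have R2: "C i c \<Longrightarrow> (\<rho> i x)^2 \<le> (x - c)^2" for i x c
  proof -
    assume Ci: "C i c"
    have sq: "\<And>a b::real. \<bar>a\<bar> \<le> \<bar>b\<bar> \<Longrightarrow> a^2 \<le> b^2" by (simp add: abs_le_square_iff)
    show ?thesis
    proof (cases "Up i")
      case True thus ?thesis using Ci unfolding \<rho>_def C_def by (auto intro!: sq)
    next
      case F: False
      show ?thesis
      proof (cases "Dn i")
        case True thus ?thesis using Ci F unfolding \<rho>_def C_def by (auto intro!: sq)
      next
        case False thus ?thesis using Ci F unfolding \<rho>_def C_def by auto
      qed
    qed
  qed
  have R3: "C i (x - \<rho> i x)" for i x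
    unfolding \<rho>_def C_def by (auto simp: min_def max_def)
  have Rc: "continuous_on UNIV (\<rho> i)" for i
    unfolding \<rho>_def by (auto intro!: continuous_intros)
  define S where "S p = (if p < N then (if Dz r c z p \<noteq> 0 then {sgn (Dz r c z p)} else {-1..1}) else {0::real})" for p
  define U where "U = PiE UNIV S"
  have Ucomp: "compact U" unfolding U_def by (rule cpt) (auto simp: S_def)
  define u1 where "u1 p = (if p < N then (if Dz r c z p \<noteq> 0 then sgn (Dz r c z p) else 0) else 0)" for p
  have uS: "u p \<in> S p" if "u \<in> U" for u p using that unfolding U_def by auto
  have u1U: "u1 \<in> U" unfolding U_def S_def u1_def by auto
  define h where "h u = (\<Sum>i<n. (\<rho> i (DTu r c u i))^2)" for u
  have cc: "continuous_on U (\<lambda>u::nat\<Rightarrow>real. u p)" for p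
    by (rule continuous_on_subset[OF continuous_on_product_coordinates]) simp
  have cD: "continuous_on U (\<lambda>u. DTu r c u i)" for i
    unfolding DTu_def by (intro continuous_intros cc)
  have ch: "continuous_on U h"
    unfolding h_def
    by (intro continuous_intros continuous_on_compose2[OF Rc cD]) auto
  obtain u0 where u0U: "u0 \<in> U" and u0min: "\<forall>u\<in>U. h u0 \<le> h u"
    using continuous_attains_inf[OF Ucomp _ ch] u1U by blast
  have hnn: "h u \<ge> 0" for u unfolding h_def by (auto intro: sum_nonneg)
  show ?thesis
  proof (cases "h u0 = 0")
    case True
    have z0: "\<rho> i (DTu r c u0 i) = 0" if "i < n" for i
    proof -
      have "\<forall>i\<in>{..<n}. (\<rho> i (DTu r c u0 i))^2 = 0"
        using True unfolding h_def by (subst sum_nonneg_eq_0_iff[symmetric]) auto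
      thus ?thesis using that by auto
    qed
    show ?thesis
    proof (intro exI[of _ u0] conjI ballI allI impI)
      fix i assume i: "i \<in> ({..<r*c} - M) \<union> (M - {i \<in> M. \<bar>y i - z i\<bar> = eps})"
      hence "\<not> Up i" "\<not> Dn i" "i < n" using Msub eps unfolding Up_def Dn_def n_def by auto
      thus "DTu r c u0 i = 0" using z0[of i] unfolding \<rho>_def by auto
    next
      fix p assume "p \<in> {p \<in> {..<nrows r c}. Dz r c z p \<noteq> 0}"
      thus "u0 p = sgn (Dz r c z p)" using uS[OF u0U, of p] unfolding S_def N_def by auto
    next
      fix p assume "p < nrows r c"
      thus "\<bar>u0 p\<bar> \<le> 1" using uS[OF u0U, of p] unfolding S_def N_def by (auto simp: sgn_if split: if_splits)
    next
      fix i assume i: "i \<in> {i \<in> M. y i - z i = eps}"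
      hence "Up i" "i < n" using Msub unfolding Up_def n_def by auto
      thus "DTu r c u0 i \<ge> 0" using z0[of i] unfolding \<rho>_def by (auto simp: min_def split: if_splits)
    next
      fix i assume i: "i \<in> {i \<in> M. y i - z i = - eps}"
      hence "Dn i" "\<not> Up i" "i < n" using Msub notboth unfolding Dn_def n_def by auto
      thus "DTu r c u0 i \<le> 0" using z0[of i] unfolding \<rho>_def by (auto simp: max_def split: if_splits)
    qed
  next
    case False
    hence hpos: "h u0 > 0" using hnn[of u0] by auto
    define v0 where "v0 i = DTu r c u0 i" for i
    define d where "d i = (if i < n then - \<rho> i (v0 i) else 0)" for i
    have claim1: "(\<Sum>i<n. d i * (DTu r c u i - v0 i)) \<le> 0" if uU: "u \<in> U" for u
    proof -
      define \<delta> where "\<delta> i = DTu r c u i - v0 i" for i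
      define a where "a = (\<Sum>i<n. d i * \<delta> i)"
      define B where "B = (\<Sum>i<n. (\<delta> i)^2)"
      have Bnn: "B \<ge> 0" unfolding B_def by (auto intro: sum_nonneg)
      have hd: "h u0 = (\<Sum>i<n. (d i)^2)"
        unfolding h_def d_def v0_def by (rule sum.cong) auto
      have key: "2*a \<le> t*B" if t: "0 < t" "t \<le> 1" for t
      proof -
        define w where "w p = u0 p + t*(u p - u0 p)" for p
        have wU: "w \<in> U" unfolding U_def
        proof (intro PiE_I)
          fix p
          have A: "u0 p \<in> S p" "u p \<in> S p" using uS u0U uU by auto
          show "w p \<in> S p"
          proof (cases "p < N \<and> Dz r c z p = 0")
            case True
            thus ?thesis using A conv1[of "u0 p" "u p" t] t unfolding S_def w_def by auto
          next
            case False
            thus ?thesis using A unfolding S_def w_def by (auto split: if_splits)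
          qed
        qed simp
        have Dw: "DTu r c w i = v0 i + t * \<delta> i" for i
          unfolding w_def \<delta>_def v0_def by (rule DTu_comb)
        have "h u0 \<le> h w" using u0min wU by auto
        also have "h w \<le> (\<Sum>i<n. (t * \<delta> i - d i)^2)"
          unfolding h_def
        proof (rule sum_mono)
          fix i assume "i \<in> {..<n}"
          hence "C i (v0 i + d i)" using R3[of i "v0 i"] unfolding d_def by simp
          from R2[OF this, of "DTu r c w i"]
          show "(\<rho> i (DTu r c w i))^2 \<le> (t * \<delta> i - d i)^2"
            unfolding Dw by (simp add: algebra_simps)
        qed
        also have "\<dots> = t^2 * B - 2*t*a + h u0"
          unfolding hd B_def a_def
          by (simp add: power2_diff power_mult_distrib sum.distrib sum_subtractf sum_distrib_left algebra_simps)
        finally have "2*t*a \<le> t^2 * B" by simp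
        hence "t*(2*a) \<le> t*(t*B)" by (simp add: power2_eq_square algebra_simps)
        thus ?thesis using t by simp
      qed
      show ?thesis
      proof (rule ccontr)
        assume "\<not> ?thesis"
        hence apos: "a > 0" unfolding a_def \<delta>_def by simp
        define t where "t = min 1 (a/(B+1))"
        have tpos: "0 < t" "t \<le> 1" using apos Bnn by (auto simp: t_def)
        have "t*(B+1) \<le> a"
        proof -
          have "t*(B+1) \<le> (a/(B+1))*(B+1)" by (rule mult_right_mono) (use Bnn in \<open>auto simp: t_def\<close>)
          thus ?thesis using Bnn by simp
        qed
        hence "t*B \<le> a - t" by (simp add: algebra_simps)
        with key[OF tpos] apos tpos show False by linarith
      qed
    qed
    have claim2: "(\<Sum>i<n. d i * v0 i) = - h u0"
      unfolding h_def d_def v0_def by (simp add: R1 sum_negf)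
    have neg: "(\<Sum>p<N. u p * Dz r c d p) < 0" if "u \<in> U" for u
    proof -
      have "(\<Sum>i<n. d i * DTu r c u i) = (\<Sum>i<n. d i * (DTu r c u i - v0 i)) + (\<Sum>i<n. d i * v0 i)"
        by (simp add: algebra_simps sum_subtractf)
      also have "\<dots> < 0" using claim1[OF that] claim2 hpos by linarith
      finally show ?thesis using swap_sum[where d=d and u=u and r=r and c=c] unfolding n_def N_def by simp
    qed
    define e where "e p = Dz r c d p" for p
    define I where "I = {p. p < N \<and> Dz r c z p \<noteq> 0}"
    define us where "us p = (if p < N then (if Dz r c z p \<noteq> 0 then sgn (Dz r c z p) else sgn (e p)) else 0)" for p
    have usU: "us \<in> U" unfolding U_def S_def us_def by (auto simp: sgn_if)
    define X where "X = (\<Sum>p<N. (if p \<in> I then sgn (Dz r c z p) * e p else \<bar>e p\<bar>))"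
    have Xneg: "X < 0"
    proof -
      have "X = (\<Sum>p<N. us p * Dz r c d p)"
        unfolding X_def us_def I_def e_def by (rule sum.cong) (auto simp: sgn_mult_self_eq abs_sgn mult.commute)
      thus ?thesis using neg[OF usU] by simp
    qed
    have finM: "finite M" using Msub finite_subset by blast
    have finI: "finite I" unfolding I_def by simp
    define bnd where "bnd i = (if \<bar>y i - z i\<bar> = eps then 2*eps else eps - \<bar>z i - y i\<bar>)" for i
    have bpos: "\<forall>i\<in>M. bnd i > 0"
    proof
      fix i assume "i \<in> M"
      hence "\<bar>z i - y i\<bar> \<le> eps" using feas unfolding feasible_def by auto
      thus "bnd i > 0" using eps unfolding bnd_def by (auto simp: abs_minus_commute)
    qed
    obtain t1 where t1: "t1 > 0" "\<forall>i\<in>M. t1 * \<bar>d i\<bar> \<le> bnd i"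
      using small_t[OF finM bpos] by blast
    have ipos: "\<forall>p\<in>I. \<bar>Dz r c z p\<bar> > 0" unfolding I_def by auto
    obtain t2 where t2: "t2 > 0" "\<forall>p\<in>I. t2 * \<bar>e p\<bar> \<le> \<bar>Dz r c z p\<bar>"
      using small_t[OF finI ipos] by blast
    define t where "t = min t1 t2"
    have tpos: "t > 0" using t1 t2 by (simp add: t_def)
    have tb1: "t * \<bar>d i\<bar> \<le> bnd i" if "i \<in> M" for i
    proof -
      have "t * \<bar>d i\<bar> \<le> t1 * \<bar>d i\<bar>" by (rule mult_right_mono) (auto simp: t_def)
      thus ?thesis using t1 that by auto
    qed
    have tb2: "t * \<bar>e p\<bar> \<le> \<bar>Dz r c z p\<bar>" if "p \<in> I" for p
    proof -
      have "t * \<bar>e p\<bar> \<le> t2 * \<bar>e p\<bar>" by (rule mult_right_mono) (auto simp: t_def)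
      thus ?thesis using t2 that by auto
    qed
    define z' where "z' q = z q + t * d q" for q
    have feas': "feasible M y eps z'"
      unfolding feasible_def
    proof
      fix i assume iM: "i \<in> M"
      hence iN: "i < n" using Msub unfolding n_def by auto
      have zb: "\<bar>z i - y i\<bar> \<le> eps" using feas iM unfolding feasible_def by auto
      have tb: "t * \<bar>d i\<bar> \<le> bnd i" using tb1 iM .
      have tdi: "t * \<bar>d i\<bar> = \<bar>t * d i\<bar>" using tpos by (simp add: abs_mult)
      show "\<bar>z' i - y i\<bar> \<le> eps"
      proof (cases "Up i")
        case True
        hence "d i \<ge> 0" using iN unfolding d_def \<rho>_def by auto
        hence "t * d i \<ge> 0" using tpos by simp
        moreover have "y i - z i = eps" using True unfolding Up_def by auto
        moreover have "t * \<bar>d i\<bar> \<le> 2*eps" using tb \<open>y i - z i = eps\<close> eps unfolding bnd_def by auto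
        ultimately show ?thesis unfolding z'_def using tdi by auto
      next
        case F: False
        show ?thesis
        proof (cases "Dn i")
          case True
          hence "d i \<le> 0" using iN F unfolding d_def \<rho>_def by auto
          hence "t * d i \<le> 0" using tpos by (simp add: mult_nonneg_nonpos)
          moreover have "y i - z i = - eps" using True unfolding Dn_def by auto
          moreover have "t * \<bar>d i\<bar> \<le> 2*eps" using tb \<open>y i - z i = - eps\<close> eps unfolding bnd_def by auto
          ultimately show ?thesis unfolding z'_def using tdi by auto
        next
          case False
          hence "\<bar>y i - z i\<bar> \<noteq> eps" using F iM unfolding Up_def Dn_def by (auto simp: abs_if split: if_splits)
          hence "t * \<bar>d i\<bar> \<le> eps - \<bar>z i - y i\<bar>" using tb unfolding bnd_def by auto
          moreover have "\<bar>z' i - y i\<bar> \<le> \<bar>z i - y i\<bar> + \<bar>t * d i\<bar>" unfolding z'_def by linarith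
          ultimately show ?thesis using tdi by linarith
        qed
      qed
    qed
    have "TV1 r c z' = (\<Sum>p<N. \<bar>Dz r c z p\<bar> + t * (if p \<in> I then sgn (Dz r c z p) * e p else \<bar>e p\<bar>))"
      unfolding TV1_def N_def
    proof (rule sum.cong)
      fix p assume p: "p \<in> {..<nrows r c}"
      have "Dz r c z' p = Dz r c z p + t * e p" unfolding z'_def e_def by (rule Dz_comb)
      moreover have "\<bar>Dz r c z p + t * e p\<bar> = \<bar>Dz r c z p\<bar> + t * (if p \<in> I then sgn (Dz r c z p) * e p else \<bar>e p\<bar>)"
      proof (cases "p \<in> I")
        case True
        hence "Dz r c z p \<noteq> 0" unfolding I_def by auto
        with abs_step[OF this tb2[OF True]] tpos True show ?thesis by simp
      next
        case False
        hence "Dz r c z p = 0" using p unfolding I_def N_def by auto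
        thus ?thesis using False tpos by (simp add: abs_mult)
      qed
      ultimately show "\<bar>Dz r c z' p\<bar> = \<bar>Dz r c z p\<bar> + t * (if p \<in> I then sgn (Dz r c z p) * e p else \<bar>e p\<bar>)" by simp
    qed simp
    also have "\<dots> = TV1 r c z + t * X"
      unfolding TV1_def X_def N_def by (simp add: sum.distrib sum_distrib_left)
    also have "\<dots> < TV1 r c z" using Xneg tpos by (simp add: mult_pos_neg)
    finally have "TV1 r c z' < TV1 r c z" .
    moreover have "TV1 r c z \<le> TV1 r c z'" using minz feas' unfolding is_minimizer_def by auto
    ultimately show ?thesis by simp
  qed
qed



hide_const (open) Finite_Cartesian_Product.vec

theorem corollary2:
  fixes r c :: nat and M :: "nat set" and eps :: real and y :: "nat \<Rightarrow> real"
    and Z :: "nat \<Rightarrow> nat \<Rightarrow> real"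
  assumes "r \<ge> 3" and "c \<ge> 3"
    and "M \<subseteq> {..<r * c}"
    and "eps > 0"
    and "feasible M y eps (vec r Z)"
  shows "is_minimizer r c M y eps (vec r Z) \<longleftrightarrow>
    (let z = vec r Z;
         n = r * c;
         Act = {i \<in> M. \<bar>y i - z i\<bar> = eps};
         Aup = {i \<in> M. y i - z i = eps};
         Adown = {i \<in> M. y i - z i = - eps};
         Abar = M - Act;
         Mbar = {..<n} - M;
         I = {p \<in> {..<nrows r c}. Dz r c z p \<noteq> 0}
     in \<exists>u :: nat \<Rightarrow> real.
          (\<forall>i \<in> Mbar \<union> Abar. DTu r c u i = 0) \<and>
          (\<forall>p \<in> I. u p = sgn (Dz r c z p)) \<and>
          (\<forall>p < nrows r c. \<bar>u p\<bar> \<le> 1) \<and>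
          (\<forall>i \<in> Aup. DTu r c u i \<ge> 0) \<and>
          (\<forall>i \<in> Adown. DTu r c u i \<le> 0))"
  unfolding Let_def
  apply (rule iffI)
   apply (drule nec[OF assms(3,4)])
   apply assumption
  apply (elim exE conjE)
  apply (rule suff[OF assms(3) assms(5)])
      apply assumption+
  done

end
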